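(* Let $\{\mathcal G,(\Gamma_0,\Gamma_1),(\widetilde\Gamma_0,\widetilde\Gamma_1)\}$ be a triple for the adjoint pair $\{S,\widetilde S\}$ satisfying (G) and (M). Then: (i) if $\operatorname{ran}\Gamma_0$ is dense in $\mathcal G$ and $\operatorname{ran}\widetilde\Gamma_0=\mathcal G$, then $\operatorname{ran}(\Gamma_0,\Gamma_1)^\top$ is dense in $\mathcal G\times\mathcal G$; (ii) if $\operatorname{ran}\widetilde\Gamma_0$ is dense in $\mathcal G$ and $\operatorname{ran}\Gamma_0=\mathcal G$, then $\operatorname{ran}(\widetilde\Gamma_0,\widetilde\Gamma_1)^\top$ is dense in $\mathcal G\times\mathcal G$. In particular, if $\operatorname{ran}\Gamma_0=\operatorname{ran}\widetilde\Gamma_0=\mathcal G$, then condition (DD) holds and the triple is a quasi boundary triple for $\{S,\widetilde S\}$.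
   Context: Let $\mathfrak H$ be a separable Hilbert space. An adjoint pair $\{S,\widetilde S\}$ consists of densely defined closed operators $S,\widetilde S$ in $\mathfrak H$ with $(Sf,g)=(f,\widetilde Sg)$ for all $f\in\operatorname{dom}S$, $g\in\operatorname{dom}\widetilde S$. Fix operators $T\subset S^*$ and $\widetilde T\subset\widetilde S^*$ which are cores, i.e. $\overline T=S^*$ and $\overline{\widetilde T}=\widetilde S^*$ (equivalently $T^*=S$, $\widetilde T^*=\widetilde S$). A triple $\{\mathcal G,(\Gamma_0,\Gamma_1),(\widetilde\Gamma_0,\widetilde\Gamma_1)\}$ for $\{S,\widetilde S\}$ consists of a Hilbert space $\mathcal G$ and linear maps $\Gamma_0,\Gamma_1:\operatorname{dom}T\to\mathcal G$, $\widetilde\Gamma_0,\widetilde\Gamma_1:\operatorname{dom}\widetilde T\to\mathcal G$. Put $A_0:=T\upharpoonright\ker\Gamma_0$ and $\widetilde A_0:=\widetilde T\upharpoonright\ker\widetilde\Gamma_0$. Conditions: (G) $(Tf,g)_{\mathfrak H}-(f,\widetilde Tg)_{\mathfrak H}=(\Gamma_1f,\widetilde\Gamma_0g)_{\mathcal G}-(\Gamma_0f,\widetilde\Gamma_1g)_{\mathcal G}$ for all $f\in\operatorname{dom}T$, $g\in\operatorname{dom}\widetilde T$; (D) $\operatorname{ran}\Gamma_0$ and $\operatorname{ran}\widetilde\Gamma_0$ are dense in $\mathcal G$; (DD) $\operatorname{ran}(\Gamma_0,\Gamma_1)^\top$ and $\operatorname{ran}(\widetilde\Gamma_0,\widetilde\Gamma_1)^\top$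 are dense in $\mathcal G\times\mathcal G$; (M) $A_0^*=\widetilde A_0$ and $\widetilde A_0^*=A_0$. A quasi boundary triple is a triple satisfying (G), (DD) and (M). *)

theory Defs
  imports "HOL-Analysis.Analysis"
begin

class scaleC = scaleR +
  fixes scaleC :: "complex \<Rightarrow> 'a \<Rightarrow> 'a" (infixr \<open>*\<^sub>C\<close> 75)
  assumes scaleR_scaleC: "scaleR r = scaleC (complex_of_real r)"

class complex_vector = scaleC + ab_group_add +
  assumes scaleC_add_right: "a *\<^sub>C (x + y) = a *\<^sub>C x + a *\<^sub>C y"
    and scaleC_add_left: "(a + b) *\<^sub>C x = a *\<^sub>C x + b *\<^sub>C x"
    and scaleC_scaleC: "a *\<^sub>C b *\<^sub>C x = (a * b) *\<^sub>C x"
    and scaleC_one: "1 *\<^sub>C x = x"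

class complex_inner = complex_vector + real_normed_vector +
  fixes cinner :: "'a \<Rightarrow> 'a \<Rightarrow> complex"
  assumes cinner_commute: "cinner x y = cnj (cinner y x)"
    and cinner_add_left: "cinner (x + y) z = cinner x z + cinner y z"
    and cinner_scaleC_left: "cinner (r *\<^sub>C x) y = r * cinner x y"
    and cinner_ge_zero: "Im (cinner x x) = 0 \<and> 0 \<le> Re (cinner x x)"
    and cinner_eq_zero_iff: "cinner x x = 0 \<longleftrightarrow> x = 0"
    and norm_eq_sqrt_cinner: "norm x = sqrt (Re (cinner x x))"

text \<open>A Hilbert space is a type of sort {complex_inner, complete_space}.\<close>

definition csubspace :: "'a::complex_vector set \<Rightarrow> bool" where
  "csubspace D \<longleftrightarrow> 0 \<in> D \<and> (\<forall>x\<in>D. \<forall>y\<in>D. x + y \<in> D) \<and> (\<forall>c. \<forall>x\<in>D. c *\<^sub>C x \<in> D)"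

definition clinear_on :: "'a::complex_vector set \<Rightarrow> ('a \<Rightarrow> 'b::complex_vector) \<Rightarrow> bool" where
  "clinear_on D A \<longleftrightarrow> (\<forall>x\<in>D. \<forall>y\<in>D. A (x + y) = A x + A y) \<and> (\<forall>c. \<forall>x\<in>D. A (c *\<^sub>C x) = c *\<^sub>C A x)"

text \<open>A linear operator in a space is a pair (domain, action) with linear domain and action.\<close>
definition lin_op :: "'a::complex_vector set \<Rightarrow> ('a \<Rightarrow> 'a) \<Rightarrow> bool" where
  "lin_op D A \<longleftrightarrow> csubspace D \<and> clinear_on D A"

definition graph :: "'a set \<Rightarrow> ('a \<Rightarrow> 'b) \<Rightarrow> ('a \<times> 'b) set" where
  "graph D A = {(f, A f) | f. f \<in> D}"

definition densely_defined :: "'a::topological_space set \<Rightarrow> bool" where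
  "densely_defined D \<longleftrightarrow> closure D = UNIV"

definition closed_op :: "'a::topological_space set \<Rightarrow> ('a \<Rightarrow> 'a) \<Rightarrow> bool" where
  "closed_op D A \<longleftrightarrow> closed (graph D A)"

definition adj :: "'a::complex_inner set \<Rightarrow> ('a \<Rightarrow> 'a) \<Rightarrow> ('a \<times> 'a) set" where
  "adj D A = {(g, h). \<forall>f\<in>D. cinner (A f) g = cinner f h}"

definition adjoint_pair :: "'a::complex_inner set \<Rightarrow> ('a \<Rightarrow> 'a) \<Rightarrow> 'a set \<Rightarrow> ('a \<Rightarrow> 'a) \<Rightarrow> bool" where
  "adjoint_pair DS S DSt St \<longleftrightarrow>
     lin_op DS S \<and> densely_defined DS \<and> closed_op DS S \<and>
     lin_op DSt St \<and> densely_defined DSt \<and> closed_op DSt St \<and>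
     (\<forall>f\<in>DS. \<forall>g\<in>DSt. cinner (S f) g = cinner f (St g))"

definition core_of_adjoint :: "'a::complex_inner set \<Rightarrow> ('a \<Rightarrow> 'a) \<Rightarrow> 'a set \<Rightarrow> ('a \<Rightarrow> 'a) \<Rightarrow> bool" where
  "core_of_adjoint DT T DS S \<longleftrightarrow>
     lin_op DT T \<and> graph DT T \<subseteq> adj DS S \<and> closure (graph DT T) = adj DS S"

definition triple :: "'a::{complex_inner,complete_space} set \<Rightarrow> ('a \<Rightarrow> 'a) \<Rightarrow> 'a set \<Rightarrow> ('a \<Rightarrow> 'a) \<Rightarrow>
    'a set \<Rightarrow> ('a \<Rightarrow> 'a) \<Rightarrow> 'a set \<Rightarrow> ('a \<Rightarrow> 'a) \<Rightarrow>
    ('a \<Rightarrow> 'g::{complex_inner,complete_space}) \<Rightarrow> ('a \<Rightarrow> 'g) \<Rightarrow> ('a \<Rightarrow> 'g) \<Rightarrow> ('a \<Rightarrow> 'g) \<Rightarrow> bool" where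
  "triple DS S DSt St DT T DTt Tt G0 G1 Gt0 Gt1 \<longleftrightarrow>
     adjoint_pair DS S DSt St \<and>
     core_of_adjoint DT T DS S \<and> core_of_adjoint DTt Tt DSt St \<and>
     clinear_on DT G0 \<and> clinear_on DT G1 \<and> clinear_on DTt Gt0 \<and> clinear_on DTt Gt1"

definition cond_G :: "'a::complex_inner set \<Rightarrow> ('a \<Rightarrow> 'a) \<Rightarrow> 'a set \<Rightarrow> ('a \<Rightarrow> 'a) \<Rightarrow>
    ('a \<Rightarrow> 'g::complex_inner) \<Rightarrow> ('a \<Rightarrow> 'g) \<Rightarrow> ('a \<Rightarrow> 'g) \<Rightarrow> ('a \<Rightarrow> 'g) \<Rightarrow> bool" where
  "cond_G DT T DTt Tt G0 G1 Gt0 Gt1 \<longleftrightarrow>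
     (\<forall>f\<in>DT. \<forall>g\<in>DTt.
        cinner (T f) g - cinner f (Tt g) = cinner (G1 f) (Gt0 g) - cinner (G0 f) (Gt1 g))"

text \<open>Condition (M): A0 = T restricted to ker G0, At0 = Tt restricted to ker Gt0,
  A0^* = At0 and At0^* = A0.\<close>
definition cond_M :: "'a::complex_inner set \<Rightarrow> ('a \<Rightarrow> 'a) \<Rightarrow> 'a set \<Rightarrow> ('a \<Rightarrow> 'a) \<Rightarrow>
    ('a \<Rightarrow> 'g::complex_inner) \<Rightarrow> ('a \<Rightarrow> 'g) \<Rightarrow> bool" where
  "cond_M DT T DTt Tt G0 Gt0 \<longleftrightarrow>
     adj {f\<in>DT. G0 f = 0} T = graph {g\<in>DTt. Gt0 g = 0} Tt \<and>
     adj {g\<in>DTt. Gt0 g = 0} Tt = graph {f\<in>DT. G0 f = 0} T"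

definition cond_DD :: "'a set \<Rightarrow> 'a set \<Rightarrow>
    ('a \<Rightarrow> 'g::topological_space) \<Rightarrow> ('a \<Rightarrow> 'g) \<Rightarrow> ('a \<Rightarrow> 'g) \<Rightarrow> ('a \<Rightarrow> 'g) \<Rightarrow> bool" where
  "cond_DD DT DTt G0 G1 Gt0 Gt1 \<longleftrightarrow>
     closure ((\<lambda>f. (G0 f, G1 f)) ` DT) = UNIV \<and> closure ((\<lambda>g. (Gt0 g, Gt1 g)) ` DTt) = UNIV"

definition quasi_boundary_triple where
  "quasi_boundary_triple DS S DSt St DT T DTt Tt G0 G1 Gt0 Gt1 \<longleftrightarrow>
     triple DS S DSt St DT T DTt Tt G0 G1 Gt0 Gt1 \<and>
     cond_G DT T DTt Tt G0 G1 Gt0 Gt1 \<and> cond_DD DT DTt G0 G1 Gt0 Gt1 \<and>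
     cond_M DT T DTt Tt G0 Gt0"

end

theory Submission
  imports Defs
begin

lemma cinner_zero_left[simp]: "cinner (0::'a::complex_inner) y = 0"
  using cinner_add_left[of "0::'a" 0 y] by simp

lemma cinner_minus_left: "cinner (- x::'a::complex_inner) y = - cinner x y"
  using cinner_add_left[of x "-x" y] neg_eq_iff_add_eq_0[of "cinner x y" "cinner (-x) y"] by simp

lemma cinner_add_right: "cinner (x::'a::complex_inner) (y + z) = cinner x y + cinner x z"
proof -
  have "cinner x (y + z) = cnj (cinner (y+z) x)" by (rule cinner_commute)
  also have "\<dots> = cnj (cinner y x) + cnj (cinner z x)" by (simp add: cinner_add_left)
  also have "\<dots> = cinner x y + cinner x z" by (simp add: cinner_commute[of y x] cinner_commute[of z x])
  finally show ?thesis .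
qed

lemma cinner_scaleC_right: "cinner (x::'a::complex_inner) (r *\<^sub>C y) = cnj r * cinner x y"
proof -
  have "cinner x (r *\<^sub>C y) = cnj (cinner (r *\<^sub>C y) x)" by (rule cinner_commute)
  also have "\<dots> = cnj r * cnj (cinner y x)" by (simp add: cinner_scaleC_left)
  also have "\<dots> = cnj r * cinner x y" by (simp add: cinner_commute[of y x])
  finally show ?thesis .
qed

lemma cinner_minus_right: "cinner (x::'a::complex_inner) (- y) = - cinner x y"
proof -
  have "cinner x (- y) = cnj (cinner (- y) x)" by (rule cinner_commute)
  also have "\<dots> = - cnj (cinner y x)" by (simp add: cinner_minus_left)
  also have "\<dots> = - cinner x y" by (simp add: cinner_commute[of y x])
  finally show ?thesis .
qed

lemma cinner_diff_left: "cinner (x - y::'a::complex_inner) z = cinner x z - cinner y z"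
  using cinner_add_left[of x "-y" z] cinner_minus_left[of y z] by simp

lemma cinner_diff_right: "cinner (x::'a::complex_inner) (y - z) = cinner x y - cinner x z"
  using cinner_add_right[of x y "-z"] cinner_minus_right[of x z] by simp

lemma norm_sq_cinner: "(norm (x::'a::complex_inner))^2 = Re (cinner x x)"
  using norm_eq_sqrt_cinner[of x] cinner_ge_zero[of x] by simp

lemma cinner_self_real: "cinner (x::'a::complex_inner) x = complex_of_real ((norm x)^2)"
  using cinner_ge_zero[of x] norm_sq_cinner[of x] by (simp add: complex_eq_iff)

lemma scaleC_zero_left[simp]: "0 *\<^sub>C (x::'a::complex_vector) = 0"
  using scaleC_add_left[of 0 0 x] by simp

lemma scaleC_minus_left: "(- a) *\<^sub>C (x::'a::complex_vector) = - (a *\<^sub>C x)"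
  using scaleC_add_left[of a "-a" x] neg_eq_iff_add_eq_0[of "a *\<^sub>C x" "(-a) *\<^sub>C x"] by simp

lemma Re_cinner_le: "Re (cinner (a::'a::complex_inner) b) \<le> norm a * norm b"
proof -
  have c: "cinner (a+b) (a+b) = cinner a a + cinner b b + (cinner a b + cinner b a)"
    by (simp add: cinner_add_left cinner_add_right)
  have r: "Re (cinner b a) = Re (cinner a b)"
    using cinner_commute[of b a] by simp
  have e1: "(norm (a+b))^2 = (norm a)^2 + (norm b)^2 + 2 * Re (cinner a b)"
    unfolding norm_sq_cinner c using r by simp
  have t1: "norm (a+b) \<le> norm a + norm b" by (rule norm_triangle_ineq)
  have "(norm (a+b))^2 \<le> (norm a + norm b)^2"
    using t1 by (simp add: power_mono)
  then show ?thesis using e1 by (simp add: power2_sum)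
qed

lemma orth_dense_zero:
  fixes x :: "'a::complex_inner"
  assumes "closure A = UNIV" and "\<And>u. u \<in> A \<Longrightarrow> cinner u x = 0"
  shows "x = 0"
proof (rule ccontr)
  assume nz: "x \<noteq> 0"
  then have np: "norm x > 0" by simp
  have "x \<in> closure A" using assms(1) by simp
  then obtain u where u: "u \<in> A" "dist u x < norm x / 2"
    using np by (metis closure_approachable half_gt_zero)
  have "cinner x x = cinner (x - u) x" using assms(2)[OF u(1)] by (simp add: cinner_diff_left)
  then have "(norm x)^2 = Re (cinner (x - u) x)" by (simp add: norm_sq_cinner)
  also have "\<dots> \<le> norm (x - u) * norm x" by (rule Re_cinner_le)
  also have "\<dots> < norm x / 2 * norm x" using u(2) np by (simp add: dist_norm norm_minus_commute)
  finally show False using np by (simp add: power2_eq_square)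
qed

lemma norm_diff_scaleC_sq:
  fixes z w :: "'a::complex_inner"
  shows "(norm (z - t *\<^sub>C w))^2 = (norm z)^2 - 2 * Re (t * cinner w z) + (cmod t)^2 * (norm w)^2"
proof -
  have c: "cinner (z - t *\<^sub>C w) (z - t *\<^sub>C w) =
      cinner z z - cnj t * cinner z w - t * cinner w z + t * cnj t * cinner w w"
    by (simp add: cinner_diff_left cinner_diff_right cinner_scaleC_left cinner_scaleC_right algebra_simps)
  have cz: "cinner z w = cnj (cinner w z)" by (rule cinner_commute)
  have tt: "t * cnj t = complex_of_real ((cmod t)^2)" using complex_norm_square[of t] by simp
  show ?thesis unfolding norm_sq_cinner[of "z - t *\<^sub>C w"] c cz
    using cinner_self_real[of z] cinner_self_real[of w] tt
    by (simp add: mult.assoc[symmetric])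
qed

lemma parallelogram:
  fixes a b :: "'a::complex_inner"
  shows "(norm (a+b))^2 + (norm (a-b))^2 = 2*(norm a)^2 + 2*(norm b)^2"
  unfolding norm_sq_cinner
  by (simp add: cinner_add_left cinner_add_right cinner_diff_left cinner_diff_right)

instantiation prod :: (complex_inner, complex_inner) complex_inner
begin
definition scaleC_prod_def: "scaleC c x = (scaleC c (fst x), scaleC c (snd x))"
definition cinner_prod_def: "cinner x y = cinner (fst x) (fst y) + cinner (snd x) (snd y)"
instance
proof
  fix r :: real
  show "(scaleR r :: 'a \<times> 'b \<Rightarrow> _) = scaleC (complex_of_real r)"
    by (rule ext) (simp add: scaleR_prod_def scaleC_prod_def scaleR_scaleC)
next
  fix a b :: complex and x y :: "'a \<times> 'b"
  show "a *\<^sub>C (x + y) = a *\<^sub>C x + a *\<^sub>C y"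
    by (simp add: scaleC_prod_def scaleC_add_right)
  show "(a + b) *\<^sub>C x = a *\<^sub>C x + b *\<^sub>C x"
    by (simp add: scaleC_prod_def scaleC_add_left)
  show "a *\<^sub>C b *\<^sub>C x = (a * b) *\<^sub>C x"
    by (simp add: scaleC_prod_def scaleC_scaleC)
  show "1 *\<^sub>C x = x"
    by (simp add: scaleC_prod_def scaleC_one)
next
  fix x y z :: "'a \<times> 'b" and r :: complex
  show "cinner x y = cnj (cinner y x)"
    by (simp add: cinner_prod_def cinner_commute[of "fst x"] cinner_commute[of "snd x"])
  show "cinner (x + y) z = cinner x z + cinner y z"
    by (simp add: cinner_prod_def cinner_add_left)
  show "cinner (r *\<^sub>C x) y = r * cinner x y"
    by (simp add: cinner_prod_def scaleC_prod_def cinner_scaleC_left algebra_simps)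
  show "Im (cinner x x) = 0 \<and> 0 \<le> Re (cinner x x)"
    using cinner_ge_zero[of "fst x"] cinner_ge_zero[of "snd x"] by (simp add: cinner_prod_def)
  show "norm x = sqrt (Re (cinner x x))"
    by (simp add: norm_prod_def cinner_prod_def norm_sq_cinner)
  show "(cinner x x = 0) = (x = 0)"
  proof
    assume h: "cinner x x = 0"
    have "Re (cinner (fst x) (fst x)) + Re (cinner (snd x) (snd x)) = 0"
      using arg_cong[where f=Re, OF h] by (simp add: cinner_prod_def)
    then have "(norm (fst x))^2 + (norm (snd x))^2 = 0" by (simp add: norm_sq_cinner)
    then have "fst x = 0" "snd x = 0" by (simp_all add: sum_power2_eq_zero_iff)
    then show "x = 0" by (simp add: prod_eq_iff)
  next
    assume "x = 0" then show "cinner x x = 0" by (simp add: cinner_prod_def)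
  qed
qed
end

lemma cinner_pair[simp]: "cinner (a, b) (c, d) = cinner a c + cinner b d"
  by (simp add: cinner_prod_def)

lemma dense_if_orth:
  fixes V :: "'h::{complex_inner,complete_space} set"
  assumes V0: "0 \<in> V" and Vadd: "\<And>x y. x \<in> V \<Longrightarrow> y \<in> V \<Longrightarrow> x + y \<in> V"
    and Vsc: "\<And>c x. x \<in> V \<Longrightarrow> c *\<^sub>C x \<in> V"
    and orth: "\<And>z. (\<And>v. v \<in> V \<Longrightarrow> cinner v z = 0) \<Longrightarrow> z = 0"
  shows "closure V = UNIV"
proof -
  have "p \<in> closure V" for p
  proof (rule ccontr)
    assume np: "p \<notin> closure V"
    define d where "d = infdist p V"
    have Vne: "V \<noteq> {}" using V0 by auto
    have dpos: "d > 0"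
      using np in_closure_iff_infdist_zero[OF Vne, of p] infdist_nonneg[of p V] d_def by force
    have low: "d \<le> norm (p - v)" if "v \<in> V" for v
      using infdist_le[OF that, of p] d_def by (simp add: dist_norm)
    define e :: "nat \<Rightarrow> real" where "e n = inverse (real (Suc n))" for n
    have epos: "e n > 0" for n by (simp add: e_def)
    have ele1: "e n \<le> 1" for n by (simp add: e_def inverse_le_1_iff)
    have emono: "e m \<le> e n" if "n \<le> m" for m n
      using that by (simp add: e_def le_imp_inverse_le)
    have "\<exists>v\<in>V. norm (p - v) < d + e n" for n
    proof (rule ccontr)
      assume "\<not> (\<exists>v\<in>V. norm (p - v) < d + e n)"
      then have "\<And>v. v \<in> V \<Longrightarrow> d + e n \<le> dist p v" by (auto simp: dist_norm not_less)
      then have "d + e n \<le> (INF a\<in>V. dist p a)" using Vne by (intro cINF_greatest) auto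
      then show False using infdist_notempty[OF Vne, of p] d_def epos[of n] by simp
    qed
    then obtain v where vV: "\<And>n. v n \<in> V" and vle: "\<And>n. norm (p - v n) < d + e n"
      by metis
    have key: "(norm (v m - v n))^2 \<le> 2 * (2*d+1) * (e m + e n)" for m n
    proof -
      define a where "a = p - v m"
      define b where "b = p - v n"
      define w where "w = scaleR (1/2) (v m + v n)"
      have wV: "w \<in> V" unfolding w_def scaleR_scaleC using vV Vadd Vsc by blast
      have ab: "a + b = scaleR 2 (p - w)" unfolding a_def b_def w_def by (simp add: algebra_simps scaleR_2)
      have nab: "2 * d \<le> norm (a + b)" unfolding ab using low[OF wV] by simp
      have nab2: "(2*d)^2 \<le> (norm (a+b))^2" by (rule power_mono[OF nab]) (use dpos in simp)
      have amb: "norm (v m - v n) = norm (a - b)" unfolding a_def b_def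
        by (simp add: norm_minus_commute)
      have par: "(norm (a+b))^2 + (norm (a-b))^2 = 2*(norm a)^2 + 2*(norm b)^2"
        by (rule parallelogram)
      have na: "(norm a)^2 \<le> (d + e m)^2" unfolding a_def
        by (rule power_mono[OF less_imp_le[OF vle[of m]] norm_ge_zero])
      have nb: "(norm b)^2 \<le> (d + e n)^2" unfolding b_def
        by (rule power_mono[OF less_imp_le[OF vle[of n]] norm_ge_zero])
      have q1: "(d + e m)^2 \<le> d^2 + (2*d+1) * e m"
        using ele1[of m] epos[of m] dpos by (simp add: power2_eq_square algebra_simps mult_left_le)
      have q2: "(d + e n)^2 \<le> d^2 + (2*d+1) * e n"
        using ele1[of n] epos[of n] dpos by (simp add: power2_eq_square algebra_simps mult_left_le)
      show ?thesis unfolding amb using par na nb q1 q2 nab2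
        by (simp add: power2_eq_square algebra_simps)
    qed
    have "Cauchy v"
    proof (rule metric_CauchyI)
      fix eps :: real assume eps: "eps > 0"
      define K where "K = 4 * (2*d+1)"
      have Kpos: "K > 0" using dpos by (simp add: K_def)
      obtain N where N: "inverse (real (Suc N)) < eps^2 / K"
        using reals_Archimedean[of "eps^2 / K"] eps Kpos by auto
      have "dist (v m) (v n) < eps" if "m \<ge> N" "n \<ge> N" for m n
      proof -
        have "e m + e n \<le> 2 * e N" using emono[OF that(1)] emono[OF that(2)] by simp
        then have "2*(2*d+1)*(e m + e n) \<le> 2*(2*d+1)*(2 * e N)"
          by (rule mult_left_mono) (use dpos in simp)
        then have "(norm (v m - v n))^2 \<le> K * e N"
          using key[of m n] unfolding K_def by (simp add: algebra_simps)
        also have "\<dots> < eps^2" using N Kpos unfolding e_def by (simp add: field_simps)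
        finally have "(norm (v m - v n))^2 < eps^2" .
        then show ?thesis using eps by (simp add: dist_norm power_less_imp_less_base)
      qed
      then show "\<exists>M. \<forall>m\<ge>M. \<forall>n\<ge>M. dist (v m) (v n) < eps" by blast
    qed
    then obtain q where q: "v \<longlonglongrightarrow> q"
      using Cauchy_convergent_iff convergent_def by blast
    define z where "z = p - q"
    have lim: "(\<lambda>n. norm (p - (v n + u))) \<longlonglongrightarrow> norm (z - u)" for u
    proof -
      have "(\<lambda>n. p - (v n + u)) \<longlonglongrightarrow> p - (q + u)" by (intro tendsto_intros q)
      then have "(\<lambda>n. norm (p - (v n + u))) \<longlonglongrightarrow> norm (p - (q + u))" by (rule tendsto_norm)
      moreover have "p - (q + u) = z - u" unfolding z_def by (simp add: algebra_simps)
      ultimately show ?thesis by simp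
    qed
    have zge: "d \<le> norm (z - u)" if "u \<in> V" for u
      using lim[of u] by (rule LIMSEQ_le_const) (use low vV Vadd that in blast)
    have ez: "(\<lambda>n. d + e n) \<longlonglongrightarrow> d"
      using tendsto_add[OF tendsto_const LIMSEQ_inverse_real_of_nat, of d] by (simp add: e_def)
    have zle: "norm z \<le> d"
    proof (rule LIMSEQ_le[OF _ ez])
      show "(\<lambda>n. norm (p - v n)) \<longlonglongrightarrow> norm z" using lim[of 0] by simp
      show "\<exists>N. \<forall>n\<ge>N. norm (p - v n) \<le> d + e n" using vle less_imp_le by blast
    qed
    have zne: "z \<noteq> 0" using zge[OF V0] dpos by auto
    have "cinner w z = 0" if wV: "w \<in> V" for w
    proof (rule ccontr)
      assume cne: "cinner w z \<noteq> 0"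
      define c where "c = cinner w z"
      define s where "s = 1 / ((norm w)^2 + 1)"
      define t where "t = complex_of_real s * cnj c"
      have spos: "s > 0" unfolding s_def using zero_le_power2[of "norm w"] by (simp add: add_nonneg_pos)
      have c2: "(cmod c)^2 > 0" using cne c_def by simp
      have tc: "Re (t * cinner w z) = s * (cmod c)^2"
        unfolding t_def c_def[symmetric] cmod_power2
        by (simp add: power2_eq_square algebra_simps)
      have tn: "(cmod t)^2 = s^2 * (cmod c)^2"
        unfolding t_def using spos by (simp add: norm_mult power_mult_distrib)
      have "d \<le> norm (z - t *\<^sub>C w)" using zge Vsc[OF wV] by blast
      then have "(norm z)^2 \<le> (norm (z - t *\<^sub>C w))^2"
        using zle norm_ge_zero[of z] by (meson order_trans power_mono)
      then have "0 \<le> - 2 * (s * (cmod c)^2) + s^2 * (cmod c)^2 * (norm w)^2"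
        unfolding norm_diff_scaleC_sq tc tn by simp
      then have "2 * (s * (cmod c)^2) \<le> (s * (cmod c)^2) * (s * (norm w)^2)"
        by (simp add: power2_eq_square algebra_simps)
      then have "2 \<le> s * (norm w)^2" using spos c2 by simp
      moreover have "s * (norm w)^2 < 1"
      proof -
        have h: "0 < (norm w)^2 + 1" using zero_le_power2[of "norm w"] by linarith
        have "s * (norm w)^2 = (norm w)^2 / ((norm w)^2 + 1)" unfolding s_def by simp
        also have "\<dots> < 1" using h by (simp add: divide_less_eq_1_pos)
        finally show ?thesis .
      qed
      ultimately show False by simp
    qed
    then have "z = 0" by (rule orth)
    then show False using zne by simp
  qed
  then show ?thesis by auto
qed

lemma cinner_zero_right[simp]: "cinner (x::'a::complex_inner) 0 = 0"
  using cinner_commute[of x 0] by simp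

lemma clinear_on_zero: "clinear_on D A \<Longrightarrow> 0 \<in> D \<Longrightarrow> A 0 = 0"
  unfolding clinear_on_def by (metis scaleC_zero_left)

lemma image_pair_subspace:
  fixes A B :: "'a::complex_vector \<Rightarrow> 'g::complex_inner"
  assumes cs: "csubspace D" and la: "clinear_on D A" and lb: "clinear_on D B"
  shows "0 \<in> (\<lambda>f. (A f, B f)) ` D"
    and "\<And>x y. x \<in> (\<lambda>f. (A f, B f)) ` D \<Longrightarrow> y \<in> (\<lambda>f. (A f, B f)) ` D \<Longrightarrow> x + y \<in> (\<lambda>f. (A f, B f)) ` D"
    and "\<And>c x. x \<in> (\<lambda>f. (A f, B f)) ` D \<Longrightarrow> c *\<^sub>C x \<in> (\<lambda>f. (A f, B f)) ` D"
proof -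
  have D0: "0 \<in> D" using cs unfolding csubspace_def by blast
  show "0 \<in> (\<lambda>f. (A f, B f)) ` D"
    using D0 clinear_on_zero[OF la D0] clinear_on_zero[OF lb D0]
    by (metis (no_types, lifting) image_eqI zero_prod_def)
  show "x + y \<in> (\<lambda>f. (A f, B f)) ` D" if hx: "x \<in> (\<lambda>f. (A f, B f)) ` D" and hy: "y \<in> (\<lambda>f. (A f, B f)) ` D" for x y
  proof -
    obtain f g where f: "f \<in> D" "x = (A f, B f)" and g: "g \<in> D" "y = (A g, B g)" using hx hy by blast
    have "f + g \<in> D" using cs f g unfolding csubspace_def by blast
    moreover have "x + y = (A (f+g), B (f+g))"
      using la lb f g unfolding clinear_on_def by simp
    ultimately show ?thesis by blast
  qed
  show "c *\<^sub>C x \<in> (\<lambda>f. (A f, B f)) ` D" if hx: "x \<in> (\<lambda>f. (A f, B f)) ` D" for c x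
  proof -
    obtain f where f: "f \<in> D" "x = (A f, B f)" using hx by blast
    have "c *\<^sub>C f \<in> D" using cs f unfolding csubspace_def by blast
    moreover have "c *\<^sub>C x = (A (c *\<^sub>C f), B (c *\<^sub>C f))"
      using la lb f unfolding clinear_on_def by (simp add: scaleC_prod_def)
    ultimately show ?thesis by blast
  qed
qed

theorem lemma2p3:
  fixes DS DSt DT DTt :: "'a::{complex_inner,complete_space} set"
    and S St T Tt :: "'a \<Rightarrow> 'a"
    and G0 G1 Gt0 Gt1 :: "'a \<Rightarrow> 'g::{complex_inner,complete_space}"
  assumes sep: "\<exists>C::'a set. countable C \<and> closure C = UNIV"
    and tr: "triple DS S DSt St DT T DTt Tt G0 G1 Gt0 Gt1"
    and G: "cond_G DT T DTt Tt G0 G1 Gt0 Gt1"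
    and M: "cond_M DT T DTt Tt G0 Gt0"
  shows "(closure (G0 ` DT) = UNIV \<and> Gt0 ` DTt = UNIV
            \<longrightarrow> closure ((\<lambda>f. (G0 f, G1 f)) ` DT) = UNIV)
       \<and> (closure (Gt0 ` DTt) = UNIV \<and> G0 ` DT = UNIV
            \<longrightarrow> closure ((\<lambda>g. (Gt0 g, Gt1 g)) ` DTt) = UNIV)
       \<and> (G0 ` DT = UNIV \<and> Gt0 ` DTt = UNIV
            \<longrightarrow> cond_DD DT DTt G0 G1 Gt0 Gt1
                \<and> quasi_boundary_triple DS S DSt St DT T DTt Tt G0 G1 Gt0 Gt1)"
proof -
  have csT: "csubspace DT" and csTt: "csubspace DTt"
    and l0: "clinear_on DT G0" and l1: "clinear_on DT G1"
    and lt0: "clinear_on DTt Gt0" and lt1: "clinear_on DTt Gt1"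
    using tr unfolding triple_def core_of_adjoint_def lin_op_def by blast+
  have Gr: "\<And>f g. f \<in> DT \<Longrightarrow> g \<in> DTt \<Longrightarrow>
      cinner (T f) g - cinner f (Tt g) = cinner (G1 f) (Gt0 g) - cinner (G0 f) (Gt1 g)"
    using G unfolding cond_G_def by blast
  have M1: "adj {f\<in>DT. G0 f = 0} T = graph {g\<in>DTt. Gt0 g = 0} Tt"
    and M2: "adj {g\<in>DTt. Gt0 g = 0} Tt = graph {f\<in>DT. G0 f = 0} T"
    using M unfolding cond_M_def by blast+
  have P1: "closure ((\<lambda>f. (G0 f, G1 f)) ` DT) = UNIV"
    if d0: "closure (G0 ` DT) = UNIV" and s0: "Gt0 ` DTt = UNIV"
  proof (rule dense_if_orth)
    show "0 \<in> (\<lambda>f. (G0 f, G1 f)) ` DT" by (rule image_pair_subspace(1)[OF csT l0 l1])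
    show "\<And>x y. x \<in> (\<lambda>f. (G0 f, G1 f)) ` DT \<Longrightarrow> y \<in> (\<lambda>f. (G0 f, G1 f)) ` DT \<Longrightarrow> x + y \<in> (\<lambda>f. (G0 f, G1 f)) ` DT"
      by (rule image_pair_subspace(2)[OF csT l0 l1])
    show "\<And>c x. x \<in> (\<lambda>f. (G0 f, G1 f)) ` DT \<Longrightarrow> c *\<^sub>C x \<in> (\<lambda>f. (G0 f, G1 f)) ` DT"
      by (rule image_pair_subspace(3)[OF csT l0 l1])
  next
    fix z :: "'g \<times> 'g"
    assume h: "\<And>v. v \<in> (\<lambda>f. (G0 f, G1 f)) ` DT \<Longrightarrow> cinner v z = 0"
    obtain x y where z: "z = (x, y)" by (cases z)
    have hf: "cinner (G0 f) x + cinner (G1 f) y = 0" if "f \<in> DT" for f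
      using h[of "(G0 f, G1 f)"] that z by auto
    obtain g where g: "g \<in> DTt" "Gt0 g = y" using s0 by (metis UNIV_I imageE)
    have "(g, Tt g) \<in> adj {f\<in>DT. G0 f = 0} T"
      unfolding adj_def
    proof (clarify)
      fix f assume f: "f \<in> DT" "G0 f = 0"
      have "cinner (G1 f) y = 0" using hf[OF f(1)] f(2) by simp
      then show "cinner (T f) g = cinner f (Tt g)" using Gr[OF f(1) g(1)] f(2) g(2) by simp
    qed
    then have "(g, Tt g) \<in> graph {g\<in>DTt. Gt0 g = 0} Tt" using M1 by simp
    then have y0: "y = 0" using g unfolding graph_def by auto
    have "x = 0"
    proof (rule orth_dense_zero[OF d0])
      fix u assume "u \<in> G0 ` DT"
      then obtain f where "f \<in> DT" "u = G0 f" by blast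
      then show "cinner u x = 0" using hf[of f] y0 by simp
    qed
    then show "z = 0" using z y0 by (simp add: zero_prod_def)
  qed
  have P2: "closure ((\<lambda>g. (Gt0 g, Gt1 g)) ` DTt) = UNIV"
    if d0: "closure (Gt0 ` DTt) = UNIV" and s0: "G0 ` DT = UNIV"
  proof (rule dense_if_orth)
    show "0 \<in> (\<lambda>f. (Gt0 f, Gt1 f)) ` DTt" by (rule image_pair_subspace(1)[OF csTt lt0 lt1])
    show "\<And>x y. x \<in> (\<lambda>f. (Gt0 f, Gt1 f)) ` DTt \<Longrightarrow> y \<in> (\<lambda>f. (Gt0 f, Gt1 f)) ` DTt \<Longrightarrow> x + y \<in> (\<lambda>f. (Gt0 f, Gt1 f)) ` DTt"
      by (rule image_pair_subspace(2)[OF csTt lt0 lt1])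
    show "\<And>c x. x \<in> (\<lambda>f. (Gt0 f, Gt1 f)) ` DTt \<Longrightarrow> c *\<^sub>C x \<in> (\<lambda>f. (Gt0 f, Gt1 f)) ` DTt"
      by (rule image_pair_subspace(3)[OF csTt lt0 lt1])
  next
    fix z :: "'g \<times> 'g"
    assume h: "\<And>v. v \<in> (\<lambda>g. (Gt0 g, Gt1 g)) ` DTt \<Longrightarrow> cinner v z = 0"
    obtain x y where z: "z = (x, y)" by (cases z)
    have hg: "cinner (Gt0 g) x + cinner (Gt1 g) y = 0" if "g \<in> DTt" for g
      using h[of "(Gt0 g, Gt1 g)"] that z by auto
    obtain f where f: "f \<in> DT" "G0 f = y" using s0 by (metis UNIV_I imageE)
    have "(f, T f) \<in> adj {g\<in>DTt. Gt0 g = 0} Tt"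
      unfolding adj_def
    proof (clarify)
      fix g assume g: "g \<in> DTt" "Gt0 g = 0"
      have "cinner (Gt1 g) y = 0" using hg[OF g(1)] g(2) by simp
      then have "cinner y (Gt1 g) = 0" using cinner_commute[of y "Gt1 g"] by simp
      then have "cinner (T f) g = cinner f (Tt g)" using Gr[OF f(1) g(1)] f(2) g(2) by simp
      then have "cnj (cinner (T f) g) = cnj (cinner f (Tt g))" by simp
      then show "cinner (Tt g) f = cinner g (T f)"
        using cinner_commute[of "T f" g] cinner_commute[of f "Tt g"] by simp
    qed
    then have "(f, T f) \<in> graph {f\<in>DT. G0 f = 0} T" using M2 by simp
    then have y0: "y = 0" using f unfolding graph_def by auto
    have "x = 0"
    proof (rule orth_dense_zero[OF d0])
      fix u assume "u \<in> Gt0 ` DTt"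
      then obtain g where "g \<in> DTt" "u = Gt0 g" by blast
      then show "cinner u x = 0" using hg[of g] y0 by simp
    qed
    then show "z = 0" using z y0 by (simp add: zero_prod_def)
  qed
  have P3: "cond_DD DT DTt G0 G1 Gt0 Gt1 \<and> quasi_boundary_triple DS S DSt St DT T DTt Tt G0 G1 Gt0 Gt1"
    if "G0 ` DT = UNIV" "Gt0 ` DTt = UNIV"
  proof -
    have "cond_DD DT DTt G0 G1 Gt0 Gt1"
      unfolding cond_DD_def using P1 P2 that by simp
    then show ?thesis using tr G M unfolding quasi_boundary_triple_def by simp
  qed
  show ?thesis using P1 P2 P3 by blast
qed

end
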